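(* Let $f\in C^2(\mathbb T,\mathbb R)$ be non-degenerate. Then $$\mathcal H^0(\{f=0\})=-\frac12\int_0^{2\pi}\big(f''(x)f(x)-f'(x)^2\big)\frac{|f(x)|}{\eta_f(x)^3}\,dx .$$
   Context: $\mathbb T=\mathbb R/2\pi\mathbb Z$, functions on $\mathbb T$ are identified with $2\pi$-periodic functions on $\mathbb R$, and $\mathcal H^0(\{f=0\})$ is the number of zeros of $f$ in one period $[0,2\pi)$. Set $\eta_f(x):=\sqrt{f(x)^2+f'(x)^2}$; $f$ is non-degenerate if $\min_x\eta_f(x)>0$. *)

theory Defs
  imports "HOL-Analysis.Analysis"
begin

text \<open>Functions on the circle T = R/2piZ are identified with 2pi-periodic functions on R.\<close>
definition periodic_2pi :: "(real \<Rightarrow> real) \<Rightarrow> bool" where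
  "periodic_2pi f \<longleftrightarrow> (\<forall>x. f (x + 2 * pi) = f x)"

definition C2 :: "(real \<Rightarrow> real) \<Rightarrow> bool" where
  "C2 f \<longleftrightarrow> (\<forall>x. f differentiable (at x)) \<and> (\<forall>x. deriv f differentiable (at x))
             \<and> continuous_on UNIV (deriv (deriv f))"

definition eta :: "(real \<Rightarrow> real) \<Rightarrow> real \<Rightarrow> real" where
  "eta f x = sqrt ((f x)\<^sup>2 + (deriv f x)\<^sup>2)"

definition nondegenerate :: "(real \<Rightarrow> real) \<Rightarrow> bool" where
  "nondegenerate f \<longleftrightarrow> (\<exists>m>0. \<forall>x. eta f x \<ge> m)"

definition num_zeros :: "(real \<Rightarrow> real) \<Rightarrow> nat" where
  "num_zeros f = card {x \<in> {0..<2 * pi}. f x = 0}"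

end

theory Submission imports Defs begin

lemma pos_right_deriv:
  fixes g :: "real \<Rightarrow> real"
  assumes "(g has_real_derivative l) (at a)" "l \<noteq> 0" "g a = 0" "a < b"
    "\<forall>x\<in>{a<..<b}. g x > 0"
  shows "l > 0"
proof (rule ccontr)
  assume "\<not> l > 0"
  then have "l < 0" using assms(2) by simp
  from DERIV_neg_dec_right[OF assms(1) this] obtain d where d: "d > 0"
    "\<forall>h>0. h < d \<longrightarrow> g a > g (a + h)" by blast
  define h where "h = min d (b - a) / 2"
  have "h > 0" "h < d" "a + h \<in> {a<..<b}" using d(1) assms(4) by (auto simp: h_def min_def field_simps)
  then show False using d assms(3,5) by fastforce
qed

lemma pos_left_deriv:
  fixes g :: "real \<Rightarrow> real"
  assumes "(g has_real_derivative l) (at b)" "l \<noteq> 0" "g b = 0" "a < b"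
    "\<forall>x\<in>{a<..<b}. g x > 0"
  shows "l < 0"
proof (rule ccontr)
  assume "\<not> l < 0"
  then have "l > 0" using assms(2) by simp
  from DERIV_pos_inc_left[OF assms(1) this] obtain d where d: "d > 0"
    "\<forall>h>0. h < d \<longrightarrow> g (b - h) < g b" by blast
  define h where "h = min d (b - a) / 2"
  have "h > 0" "h < d" "b - h \<in> {a<..<b}" using d(1) assms(4) by (auto simp: h_def min_def field_simps)
  then show False using d assms(3,5) by fastforce
qed

lemma const_sign:
  fixes g :: "real \<Rightarrow> real"
  assumes "continuous_on UNIV g" "\<forall>x\<in>{a<..<b}. g x \<noteq> 0"
  shows "(\<forall>x\<in>{a<..<b}. g x > 0) \<or> (\<forall>x\<in>{a<..<b}. g x < 0)"
proof (rule ccontr)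
  assume "\<not> ?thesis"
  then obtain x y where xy: "x \<in> {a<..<b}" "y \<in> {a<..<b}" "g x > 0" "g y < 0"
    using assms(2) by (meson linorder_neqE_linordered_idom)
  have ic: "isCont g t" for t using assms(1) by (simp add: continuous_on_eq_continuous_at)
  have "\<exists>t. min x y \<le> t \<and> t \<le> max x y \<and> g t = 0"
  proof (cases "x \<le> y")
    case True
    then show ?thesis using IVT2[of g y 0 x] xy ic by force
  next
    case False
    then show ?thesis using IVT[of g y 0 x] xy ic by force
  qed
  then obtain t where "min x y \<le> t" "t \<le> max x y" "g t = 0" by blast
  moreover have "t \<in> {a<..<b}" using calculation xy by auto
  ultimately show False using assms(2) by blast
qed

lemma alg_aux:
  fixes A B C e :: real
  assumes "e > 0" "e * e = A * A + B * B"
  shows "(C * e - B * ((inverse e / 2) * (2 * A * B + 2 * B * C))) / (e * e) = A * (C * A - B\<^sup>2) / e ^ 3"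
proof -
  have "(C * e - B * ((inverse e / 2) * (2 * A * B + 2 * B * C))) / (e * e)
      = (C * (e * e) - B * (A * B + B * C)) / e ^ 3"
    using assms(1) by (simp add: field_simps power3_eq_cube)
  also have "\<dots> = A * (C * A - B\<^sup>2) / e ^ 3"
    unfolding assms(2) by (simp add: algebra_simps power2_eq_square)
  finally show ?thesis .
qed

context
  fixes f :: "real \<Rightarrow> real"
  assumes per: "periodic_2pi f" and c2: "C2 f" and nd: "nondegenerate f"
begin

lemma d1: "(f has_real_derivative deriv f x) (at x)"
  using c2 unfolding C2_def by (simp add: DERIV_deriv_iff_real_differentiable)

lemma d2: "(deriv f has_real_derivative deriv (deriv f) x) (at x)"
  using c2 unfolding C2_def by (simp add: DERIV_deriv_iff_real_differentiable)

lemma cf: "continuous_on UNIV f"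
  using d1 by (meson DERIV_isCont continuous_at_imp_continuous_on)

lemma cf1: "continuous_on UNIV (deriv f)"
  using d2 by (meson DERIV_isCont continuous_at_imp_continuous_on)

lemma cf2: "continuous_on UNIV (deriv (deriv f))"
  using c2 unfolding C2_def by simp

lemma eta_pos: "eta f x > 0"
  using nd unfolding nondegenerate_def by (meson less_le_trans)

lemma zero_simple: "f x = 0 \<Longrightarrow> deriv f x \<noteq> 0"
  using eta_pos[of x] by (auto simp: eta_def)

lemma per_deriv:
  assumes "\<And>x. g (x + 2 * pi) = g x" "\<And>x. (g has_real_derivative deriv g x) (at x)"
  shows "deriv g (x + 2 * pi) = deriv g x"
proof -
  have "((\<lambda>y. g (y + 2 * pi)) has_real_derivative deriv g (x + 2 * pi) * 1) (at x)"
    by (rule DERIV_chain2[OF assms(2)]) (auto intro!: derivative_eq_intros)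
  then have "(g has_real_derivative deriv g (x + 2 * pi)) (at x)" using assms(1) by simp
  then show ?thesis using assms(2)[of x] DERIV_unique by blast
qed

lemma perf: "f (x + 2 * pi) = f x" using per unfolding periodic_2pi_def by simp

lemma perf1: "deriv f (x + 2 * pi) = deriv f x"
  using per_deriv[of f] perf d1 by blast

lemma perf2: "deriv (deriv f) (x + 2 * pi) = deriv (deriv f) x"
  using per_deriv[of "deriv f"] perf1 d2 by blast

definition I :: "real \<Rightarrow> real" where
  "I x = (deriv (deriv f) x * f x - (deriv f x)\<^sup>2) * \<bar>f x\<bar> / (eta f x) ^ 3"

lemma perI: "I (x + 2 * pi) = I x"
  by (simp add: I_def eta_def perf perf1 perf2)

lemma ceta: "continuous_on UNIV (eta f)"
  unfolding eta_def[abs_def]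
  by (intro continuous_intros cf[THEN continuous_on_subset] cf1[THEN continuous_on_subset]) auto

lemma deriv_H: "((\<lambda>x. deriv f x / eta f x) has_real_derivative
    f x * (deriv (deriv f) x * f x - (deriv f x)\<^sup>2) / (eta f x) ^ 3) (at x)"
proof -
  let ?q = "(f x)\<^sup>2 + (deriv f x)\<^sup>2"
  have qp: "?q > 0" using eta_pos[of x] unfolding eta_def by auto
  have de: "(eta f has_real_derivative (inverse (sqrt ?q) / 2) * (2 * f x * deriv f x + 2 * deriv f x * deriv (deriv f) x)) (at x)"
    unfolding eta_def[abs_def]
    by (rule DERIV_chain2[where g="\<lambda>x. (f x)\<^sup>2 + (deriv f x)\<^sup>2", OF DERIV_real_sqrt[OF qp]])
       (auto intro!: derivative_eq_intros d1 d2 simp: power2_eq_square)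
  have "((\<lambda>x. deriv f x / eta f x) has_real_derivative
     (deriv (deriv f) x * eta f x - deriv f x * ((inverse (sqrt ?q) / 2) * (2 * f x * deriv f x + 2 * deriv f x * deriv (deriv f) x))) / (eta f x * eta f x)) (at x)"
    using eta_pos[of x] by (intro DERIV_divide d2 de) auto
  moreover have "(deriv (deriv f) x * eta f x - deriv f x * ((inverse (sqrt ?q) / 2) * (2 * f x * deriv f x + 2 * deriv f x * deriv (deriv f) x))) / (eta f x * eta f x)
     = f x * (deriv (deriv f) x * f x - (deriv f x)\<^sup>2) / (eta f x) ^ 3"
  proof -
    have e: "sqrt ?q = eta f x" "eta f x * eta f x = f x * f x + deriv f x * deriv f x"
      using qp by (auto simp: eta_def power2_eq_square)
    show ?thesis unfolding e(1) by (rule alg_aux[OF eta_pos e(2)])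
  qed
  ultimately show ?thesis by simp
qed


lemma lemmaA:
  assumes "a < b" "\<forall>x\<in>{a<..<b}. s * f x = \<bar>f x\<bar>"
  shows "(I has_integral s * (deriv f b / eta f b - deriv f a / eta f a)) {a..b}"
proof -
  have "(I has_integral (s * (deriv f b / eta f b) - s * (deriv f a / eta f a))) {a..b}"
  proof (rule fundamental_theorem_of_calculus_interior)
    show "continuous_on {a..b} (\<lambda>x. s * (deriv f x / eta f x))"
      using eta_pos
      by (intro continuous_intros cf1[THEN continuous_on_subset] ceta[THEN continuous_on_subset]) 
         (auto simp: less_imp_neq[symmetric])
    fix x assume x: "x \<in> {a<..<b}"
    have "((\<lambda>x. s * (deriv f x / eta f x)) has_real_derivative
        s * (f x * (deriv (deriv f) x * f x - (deriv f x)\<^sup>2) / (eta f x) ^ 3)) (at x)"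
      by (intro DERIV_cmult deriv_H)
    moreover have "s * (f x * (deriv (deriv f) x * f x - (deriv f x)\<^sup>2) / (eta f x) ^ 3) = I x"
    proof -
      have sx: "s * f x = \<bar>f x\<bar>" using assms(2) x by blast
      show ?thesis unfolding I_def sx[symmetric] by (simp add: algebra_simps)
    qed
    ultimately show "((\<lambda>x. s * (deriv f x / eta f x)) has_vector_derivative I x) (at x)"
      by (simp add: has_real_derivative_iff_has_vector_derivative)
  qed (use assms in auto)
  then show ?thesis by (simp add: algebra_simps)
qed

lemma finite_zeros: "finite {x\<in>{a..b}. f x = 0}"
proof (rule ccontr)
  let ?S = "{x\<in>{a..b}. f x = 0}"
  assume "infinite ?S"
  have sub: "?S \<subseteq> {a..b}" by blast
  have "\<exists>x\<in>{a..b}. x islimpt ?S"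
    using Heine_Borel_imp_Bolzano_Weierstrass[OF compact_Icc \<open>infinite ?S\<close> sub] .
  then obtain x where x: "x \<in> {a..b}" "x islimpt ?S" by blast
  have cl: "closed {x. f x = 0}" using closed_Collect_eq[OF cf continuous_on_const] by simp
  have "x islimpt {x. f x = 0}" by (rule islimpt_subset[OF x(2)]) auto
  then have fx: "f x = 0" using cl closed_limpt by auto
  have "((\<lambda>y. (f y - f x) / (y - x)) \<longlongrightarrow> deriv f x) (at x)"
    using d1[of x] unfolding has_field_derivative_iff .
  then have "eventually (\<lambda>y. (f y - f x) / (y - x) \<noteq> 0) (at x)"
    using tendsto_imp_eventually_ne[OF _ zero_simple[OF fx]] by blast
  then have "eventually (\<lambda>y. y \<notin> ?S) (at x)"
    by (rule eventually_mono) (auto simp: fx)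
  then show False using x(2) by (simp add: islimpt_iff_eventually)
qed

lemma finite_zeros_open: "finite {x\<in>{a<..<b}. f x = 0}"
  by (rule finite_subset[OF _ finite_zeros[of a b]]) auto

lemma endpoint_vals:
  assumes "a < b" "f a = 0" "f b = 0" "\<forall>x\<in>{a<..<b}. f x \<noteq> 0"
  shows "(I has_integral -2) {a..b}"
proof -
  have sgn: "(\<forall>x\<in>{a<..<b}. f x > 0) \<or> (\<forall>x\<in>{a<..<b}. f x < 0)"
    using const_sign[OF cf assms(4)] .
  have ea: "eta f a = \<bar>deriv f a\<bar>" "eta f b = \<bar>deriv f b\<bar>"
    using assms(2,3) by (auto simp: eta_def)
  show ?thesis
  proof (cases "\<forall>x\<in>{a<..<b}. f x > 0")
    case True
    have "deriv f a > 0" using pos_right_deriv[OF d1 zero_simple[OF assms(2)] assms(2,1) True] .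
    moreover have "deriv f b < 0" using pos_left_deriv[OF d1 zero_simple[OF assms(3)] assms(3,1) True] .
    moreover have "(I has_integral 1 * (deriv f b / eta f b - deriv f a / eta f a)) {a..b}"
      using True by (intro lemmaA assms(1)) auto
    ultimately show ?thesis using ea by simp
  next
    case False
    then have neg: "\<forall>x\<in>{a<..<b}. - f x > 0" using sgn by auto
    have "- deriv f a > 0"
      using pos_right_deriv[OF DERIV_minus[OF d1] _ _ assms(1) neg] zero_simple[OF assms(2)] assms(2) by simp
    moreover have "- deriv f b < 0"
      using pos_left_deriv[OF DERIV_minus[OF d1] _ _ assms(1) neg] zero_simple[OF assms(3)] assms(3) by simp
    moreover have "(I has_integral (-1) * (deriv f b / eta f b - deriv f a / eta f a)) {a..b}"
      using neg by (intro lemmaA assms(1)) auto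
    ultimately show ?thesis using ea by simp
  qed
qed

lemma lemmaB:
  "a < b \<Longrightarrow> f a = 0 \<Longrightarrow> f b = 0 \<Longrightarrow> card {x\<in>{a<..<b}. f x = 0} = n
    \<Longrightarrow> (I has_integral -2 * (real n + 1)) {a..b}"
proof (induction n arbitrary: a b rule: less_induct)
  case (less n)
  show ?case
  proof (cases "n = 0")
    case True
    then have "{x\<in>{a<..<b}. f x = 0} = {}" using less.prems(4) finite_zeros_open[of a b] by simp
    then have "\<forall>x\<in>{a<..<b}. f x \<noteq> 0" by blast
    then show ?thesis using endpoint_vals less.prems True by simp
  next
    case False
    then obtain c where c: "c \<in> {a<..<b}" "f c = 0" using less.prems(4)
      by (metis (mono_tags, lifting) card.empty empty_iff mem_Collect_eq subsetI subset_antisym)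
    let ?Z = "\<lambda>a b. {x\<in>{a<..<b}. f x = 0}"
    have split: "?Z a b = ?Z a c \<union> {c} \<union> ?Z c b" using c by auto
    have fA: "finite (?Z a c)" and fB: "finite (?Z c b)" by (rule finite_zeros_open)+
    have "card (?Z a c \<union> {c} \<union> ?Z c b) = card (?Z a c \<union> {c}) + card (?Z c b)"
      by (rule card_Un_disjoint) (use fA fB in auto)
    moreover have "card (?Z a c \<union> {c}) = card (?Z a c) + 1" using fA by simp
    ultimately have "card (?Z a b) = card (?Z a c) + 1 + card (?Z c b)"
      unfolding split by simp
    then have cn: "card (?Z a c) + 1 + card (?Z c b) = n" using less.prems(4) by simp
    have i1: "(I has_integral -2 * (real (card (?Z a c)) + 1)) {a..c}"
      using less.IH[of "card (?Z a c)" a c] cn c less.prems by auto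
    have i2: "(I has_integral -2 * (real (card (?Z c b)) + 1)) {c..b}"
      using less.IH[of "card (?Z c b)" c b] cn c less.prems by auto
    have "(I has_integral (-2 * (real (card (?Z a c)) + 1) + -2 * (real (card (?Z c b)) + 1))) {a..b}"
      using has_integral_combine[OF _ _ i1 i2] c by auto
    note hI = this
    have eq: "-2 * (real (card (?Z a c)) + 1) + -2 * (real (card (?Z c b)) + 1) = -2 * (real n + 1)"
    proof -
      have "real n = real (card (?Z a c)) + 1 + real (card (?Z c b))" by (simp add: cn[symmetric])
      then show ?thesis by (simp add: algebra_simps)
    qed
    show ?thesis using hI unfolding eq .
  qed
qed

end

theorem proposition1:
  fixes f :: "real \<Rightarrow> real"
  assumes "periodic_2pi f" and "C2 f" and "nondegenerate f"
  shows "real (num_zeros f) =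
    - (1/2) * integral {0..2 * pi}
        (\<lambda>x. (deriv (deriv f) x * f x - (deriv f x)\<^sup>2) * \<bar>f x\<bar> / (eta f x) ^ 3)"
proof -
  have IE: "(\<lambda>x. (deriv (deriv f) x * f x - (deriv f x)\<^sup>2) * \<bar>f x\<bar> / (eta f x) ^ 3) = I f"
    by (rule ext) (simp add: I_def[OF assms])
  define Z where "Z = {x \<in> {0..<2*pi}. f x = 0}"
  have finZ: "finite Z"
    by (rule finite_subset[OF _ finite_zeros[OF assms, of 0 "2*pi"]]) (auto simp: Z_def)
  have nz: "num_zeros f = card Z" by (simp add: num_zeros_def Z_def)
  have pf: "f (x + 2 * pi) = f x" for x using perf[OF assms] .
  show ?thesis
  proof (cases "Z = {}")
    case True
    have "\<forall>x\<in>{0<..<2*pi}. f x \<noteq> 0" using True by (auto simp: Z_def)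
    then have sg: "(\<forall>x\<in>{0<..<2*pi}. f x > 0) \<or> (\<forall>x\<in>{0<..<2*pi}. f x < 0)"
      using const_sign[OF cf[OF assms]] by blast
    obtain s :: real where s: "\<forall>x\<in>{0<..<2*pi}. s * f x = \<bar>f x\<bar>"
    proof (cases "\<forall>x\<in>{0<..<2*pi}. f x > 0")
      case True
      then show ?thesis by (intro that[of 1]) auto
    next
      case False
      then show ?thesis using sg by (intro that[of "-1"]) auto
    qed
    have "(I f has_integral s * (deriv f (0 + 2*pi) / eta f (0 + 2*pi) - deriv f 0 / eta f 0)) {0..2*pi}"
      using lemmaA[OF assms, of 0 "2*pi" s] s by simp
    then have "(I f has_integral 0) {0..2*pi}"
      by (simp only: perf1[OF assms] eta_def pf) simp
    then show ?thesis using True nz IE by (simp add: integral_unique)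
  next
    case False
    define z0 where "z0 = Min Z"
    have z0Z: "z0 \<in> Z" using Min_in[OF finZ False] z0_def by simp
    have z0min: "\<And>x. x \<in> Z \<Longrightarrow> z0 \<le> x" using Min_le[OF finZ] z0_def by simp
    have z0: "0 \<le> z0" "z0 < 2*pi" "f z0 = 0" using z0Z by (auto simp: Z_def)
    have eqZ: "{x\<in>{z0<..<z0+2*pi}. f x = 0} = Z - {z0}"
    proof
      show "Z - {z0} \<subseteq> {x\<in>{z0<..<z0+2*pi}. f x = 0}"
        using z0min z0 by (force simp: Z_def)
    next
      show "{x\<in>{z0<..<z0+2*pi}. f x = 0} \<subseteq> Z - {z0}"
      proof
        fix x assume x: "x \<in> {x\<in>{z0<..<z0+2*pi}. f x = 0}"
        show "x \<in> Z - {z0}"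
        proof (cases "x < 2*pi")
          case True
          then show ?thesis using x z0 by (auto simp: Z_def)
        next
          case False
          have "f (x - 2*pi) = 0" using pf[of "x - 2*pi"] x by simp
          then have "x - 2*pi \<in> Z" using False x z0 by (auto simp: Z_def)
          then have "z0 \<le> x - 2*pi" by (rule z0min)
          then show ?thesis using x by auto
        qed
      qed
    qed
    have cardZ: "card Z = card (Z - {z0}) + 1"
      using finZ z0Z by (simp add: card_Diff_singleton) (metis Suc_pred card_gt_0_iff emptyE)
    have fz2: "f (z0 + 2*pi) = 0" using pf z0 by simp
    have hB: "(I f has_integral -2 * (real (card (Z - {z0})) + 1)) {z0..z0+2*pi}"
      using lemmaB[OF assms, of z0 "z0+2*pi" "card (Z - {z0})"] z0 fz2 eqZ by simp
    moreover have "-2 * (real (card (Z - {z0})) + 1) = -2 * real (card Z)"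
      using cardZ by simp
    ultimately have hB': "(I f has_integral -2 * real (card Z)) {z0..z0+2*pi}"
      by simp
    have int: "I f integrable_on {z0..z0+2*pi}" using hB by blast
    obtain v1 where v1: "(I f has_integral v1) {z0..2*pi}"
      using integrable_subinterval_real[OF int, of z0 "2*pi"] z0 by auto
    obtain v2 where v2: "(I f has_integral v2) {2*pi..z0+2*pi}"
      using integrable_subinterval_real[OF int, of "2*pi" "z0+2*pi"] z0 by auto
    have "(I f has_integral v1 + v2) {z0..z0+2*pi}"
      using has_integral_combine[OF _ _ v1 v2] z0 by simp
    then have sum: "v1 + v2 = -2 * real (card Z)" using hB' has_integral_unique by blast
    have "((\<lambda>x. I f (1 *\<^sub>R x + 2*pi)) has_integral (v2 /\<^sub>R 1 ^ DIM(real)))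
           (cbox ((2*pi - 2*pi) /\<^sub>R 1) ((z0 + 2*pi - 2*pi) /\<^sub>R 1))"
      by (rule has_integral_affinity'[of "I f" v2 "2*pi" "z0+2*pi" 1 "2*pi"]) (use v2 in auto)
    then have v2': "(I f has_integral v2) {0..z0}"
      by (simp add: perI[OF assms])
    have "(I f has_integral v2 + v1) {0..2*pi}"
      using has_integral_combine[OF _ _ v2' v1] z0 by simp
    then have "integral {0..2*pi} (I f) = -2 * real (card Z)"
      using sum by (simp add: integral_unique algebra_simps)
    then show ?thesis using nz IE by simp
  qed
qed

end
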